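(* Let $R$ be a finite set of positive integers with $r=|R|$, let $L$ be an $R$-flag on vertex set $\{1,\dots,v(L)\}$, and let $s_1,\dots,s_{v(L)}$ be positive integers. Then, as $n\to\infty$, \[\pi_n(L(s_1,\dots,s_{v(L)}))=r-1+O(n^{-\delta}),\qquad \delta=\frac{\max\{s_i:1\le i\le v(L)\}}{\prod_{i=1}^{v(L)}s_i}.\]
   Context: A hypergraph $H=(V,E)$ has finite vertex set $V$ and edge set $E\subseteq 2^V$; $R(H)=\{|F|:F\in E\}$. $H_1\subseteq H_2$ means there is an injective $f\colon V(H_1)\to V(H_2)$ with $f(F)\in E(H_2)$ for all $F\in E(H_1)$. For $G$ on $n$ vertices, $h_n(G)=\sum_{F\in E(G)}1/\binom{n}{|F|}$; $\pi_n(H)=\max\{h_n(G): G\text{ on } n \text{ vertices}, R(G)\subseteq R(H), H\not\subseteq G\}$. An $R$-flag is a hypergraph with exactly one edge of each size in $R$ (and no other edges). For $H$ on vertex set $\{1,\dots,m\}$, the blowup $H(s_1,\dots,s_m)$ has vertex set $V_1\sqcup\dots\sqcup V_m$, $|V_i|=s_i$, and edge set $\bigcup_{F\in E(H)}\prod_{i\in F}V_i$. *)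

theory Defs
  imports Complex_Main "HOL-Library.Landau_Symbols"
begin

type_synonym 'a hypergraph = "'a set \<times> 'a set set"

definition hypergraph :: "'a hypergraph \<Rightarrow> bool" where
  "hypergraph H \<longleftrightarrow> finite (fst H) \<and> snd H \<subseteq> Pow (fst H)"

definition edge_sizes :: "'a hypergraph \<Rightarrow> nat set" where
  "edge_sizes H = card ` snd H"

definition subhypergraph :: "'a hypergraph \<Rightarrow> 'b hypergraph \<Rightarrow> bool" where
  "subhypergraph H1 H2 \<longleftrightarrow>
     (\<exists>f. inj_on f (fst H1) \<and> f ` fst H1 \<subseteq> fst H2 \<and> (\<forall>F\<in>snd H1. f ` F \<in> snd H2))"

definition hdens :: "nat \<Rightarrow> 'a hypergraph \<Rightarrow> real" where
  "hdens n G = (\<Sum>F\<in>snd G. 1 / real (n choose card F))"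

text \<open>pi_n(H): maximum of h_n(G) over H-free hypergraphs G on n vertices (wlog on {0..<n})
  with R(G) \<subseteq> R(H).\<close>
definition pi_n :: "nat \<Rightarrow> 'a hypergraph \<Rightarrow> real" where
  "pi_n n H = Max {hdens n G | G :: nat hypergraph.
      fst G = {0..<n} \<and> hypergraph G \<and> edge_sizes G \<subseteq> edge_sizes H \<and> \<not> subhypergraph H G}"

definition is_flag :: "nat set \<Rightarrow> nat hypergraph \<Rightarrow> nat \<Rightarrow> bool" where
  "is_flag R L m \<longleftrightarrow> hypergraph L \<and> fst L = {1..m} \<and>
     (\<forall>k\<in>R. \<exists>!F. F \<in> snd L \<and> card F = k) \<and> (\<forall>F\<in>snd L. card F \<in> R)"

text \<open>Blowup H(s_1,...): part V_i = {i} \<times> {0..<s i}; edges are the transversals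
  of the parts indexed by an edge F of H (the product of the V_i, i \<in> F).\<close>
definition blow_part :: "(nat \<Rightarrow> nat) \<Rightarrow> nat \<Rightarrow> (nat \<times> nat) set" where
  "blow_part s i = {i} \<times> {0..<s i}"

definition blowup :: "nat hypergraph \<Rightarrow> (nat \<Rightarrow> nat) \<Rightarrow> (nat \<times> nat) hypergraph" where
  "blowup H s = ((\<Union>i\<in>fst H. blow_part s i),
     (\<Union>F\<in>snd H. {X. X \<subseteq> (\<Union>i\<in>F. blow_part s i) \<and> (\<forall>i\<in>F. card (X \<inter> blow_part s i) = 1)}))"

end

theory Submission
  imports Defs "HOL-Analysis.Convex"
begin


lemma alg:
  fixes D N S C' x :: real and n k t Q :: nat
  assumes N: "N = real n ^ k" and n1: "n \<ge> 1" and t1: "t \<ge> 1" and Q1: "Q \<ge> 1" and k1: "k \<ge> 1"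
    and Slow: "S \<ge> N * x ^ t - N" and x: "x = D / real t / N" and D0: "D \<ge> 0" and C0: "C' \<ge> 0"
    and Sup: "S ^ Q \<le> real n ^ (t*Q) * (C' * real n ^ (k*Q-1))"
  shows "D ^ (t*Q) \<le> (C' * 2^Q * real t ^ (t*Q) + (2 * real t) ^ (t*Q)) * real n ^ (Suc k * (t*Q) - 1)"
proof -
  have Npos: "N > 0" using N n1 by simp
  have tpos: "real t > 0" using t1 by simp
  have Dx: "D = x * N * real t" using x Npos tpos by (simp add: field_simps)
  have x0: "x \<ge> 0" using x D0 Npos tpos by simp
  have n0: "real n \<ge> 1" using n1 by simp
  have R0: "0 \<le> C' * 2^Q * real t ^ (t*Q)" using C0 by simp
  have R1: "0 \<le> (2 * real t) ^ (t*Q)" by simp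
  show ?thesis
  proof (cases "x \<ge> 2")
    case True
    have "x \<le> x ^ t" using True t1 by (metis dual_order.trans one_le_numeral power_increasing power_one_right)
    then have xt2: "x ^ t \<ge> 2" using True by linarith
    have "N * 2 \<le> N * x ^ t" using xt2 Npos by (intro mult_left_mono) auto
    then have S1: "S \<ge> N * x ^ t / 2" using Slow by linarith
    have S2: "0 \<le> N * x ^ t / 2" using Npos x0 by simp
    have "(N * x ^ t / 2) ^ Q \<le> S ^ Q" using S1 S2 by (simp add: power_mono)
    also have "\<dots> \<le> real n ^ (t*Q) * (C' * real n ^ (k*Q-1))" by (rule Sup)
    also have "\<dots> = C' * real n ^ (t*Q + (k*Q-1))" by (simp add: power_add mult.left_commute)
    finally have A: "(N * x ^ t / 2) ^ Q \<le> C' * real n ^ (t*Q + (k*Q-1))" .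
    have "D ^ (t*Q) = (N * x ^ t / 2) ^ Q * (2^Q * real t ^ (t*Q) * N ^ ((t-1)*Q))"
    proof -
      have "D ^ (t*Q) = x ^ (t*Q) * N ^ (t*Q) * real t ^ (t*Q)" by (simp add: Dx power_mult_distrib)
      also have "N ^ (t*Q) = N^Q * N ^ ((t-1)*Q)"
        using t1 by (metis (no_types, lifting) add.commute le_add_diff_inverse2 mult.left_neutral distrib_right power_add)
      finally show ?thesis by (simp add: power_mult_distrib power_mult[symmetric] power_divide algebra_simps)
    qed
    also have "\<dots> \<le> C' * real n ^ (t*Q + (k*Q-1)) * (2^Q * real t ^ (t*Q) * N ^ ((t-1)*Q))"
      using A by (rule mult_right_mono) (use Npos in simp)
    also have "\<dots> = C' * 2^Q * real t ^ (t*Q) * real n ^ (t*Q + (k*Q-1) + k*((t-1)*Q))"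
      by (simp add: N power_add power_mult[symmetric] algebra_simps)
    also have "t*Q + (k*Q-1) + k*((t-1)*Q) = Suc k * (t*Q) - 1"
    proof -
      have "k*Q \<ge> 1" using k1 Q1 by simp
      moreover have "(t-1)*Q + Q = t*Q" using t1 by (cases t) auto
      then have "k*((t-1)*Q) + k*Q = k*(t*Q)" by (metis add_mult_distrib2)
      then have "Suc k * (t*Q) = t*Q + k*((t-1)*Q) + k*Q" by simp
      ultimately show ?thesis by linarith
    qed
    finally have L: "D ^ (t*Q) \<le> C' * 2^Q * real t ^ (t*Q) * real n ^ (Suc k * (t*Q) - 1)" .
    have "0 \<le> (2 * real t) ^ (t*Q) * real n ^ (Suc k * (t*Q) - 1)" by simp
    then show ?thesis using L unfolding distrib_right by linarith
  next
    case False
    have "x * (N * real t) \<le> 2 * (N * real t)" using False Npos tpos by (intro mult_right_mono) auto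
    then have "D \<le> 2 * real t * N" using Dx by (simp add: mult.assoc mult.commute mult.left_commute)
    then have "D ^ (t*Q) \<le> (2 * real t * N) ^ (t*Q)" using D0 by (simp add: power_mono)
    also have "\<dots> = (2*real t) ^ (t*Q) * real n ^ (k*(t*Q))" by (simp add: N power_mult_distrib power_mult)
    also have "\<dots> \<le> (2*real t) ^ (t*Q) * real n ^ (Suc k * (t*Q) - 1)"
    proof -
      have tq: "1 \<le> t*Q" using t1 Q1 by (metis mult_le_mono nat_mult_1)
      have "Suc k * (t*Q) = t*Q + k*(t*Q)" by simp
      then have "k*(t*Q) \<le> Suc k * (t*Q) - 1" using tq by linarith
      then show ?thesis by (intro mult_left_mono power_increasing n0) simp_all
    qed
    finally have L: "D ^ (t*Q) \<le> (2*real t) ^ (t*Q) * real n ^ (Suc k * (t*Q) - 1)" .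
    have "0 \<le> C' * 2^Q * real t ^ (t*Q) * real n ^ (Suc k * (t*Q) - 1)" using C0 by simp
    then show ?thesis using L unfolding distrib_right by linarith
  qed
qed




definition boxset :: "'a set list \<Rightarrow> 'a list set" where
  "boxset As = {xs. length xs = length As \<and> (\<forall>i<length As. xs!i \<in> As!i)}"

definition hasbox :: "'a set \<Rightarrow> nat list \<Rightarrow> 'a list set \<Rightarrow> bool" where
  "hasbox V ss T \<longleftrightarrow> (\<exists>As. length As = length ss \<and>
     (\<forall>i<length ss. As!i \<subseteq> V \<and> card (As!i) = ss!i) \<and> boxset As \<subseteq> T)"

definition QQ :: "nat list \<Rightarrow> nat" where "QQ ss = prod_list (butlast ss)"

lemma boxset_Cons: "boxset (A # As) = {v # ys | v ys. v \<in> A \<and> ys \<in> boxset As}"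
  unfolding boxset_def
  apply (auto simp: nth_Cons split: nat.splits)
  apply (metis length_Suc_conv nth_Cons_0 nth_Cons_Suc Suc_mono)
  done

lemma power_mean:
  fixes a :: "'b \<Rightarrow> real"
  assumes "finite Y" "Y \<noteq> {}" "\<And>y. y \<in> Y \<Longrightarrow> a y \<ge> 0"
  shows "real (card Y) * ((\<Sum>y\<in>Y. a y) / real (card Y)) ^ t \<le> (\<Sum>y\<in>Y. a y ^ t)"
proof -
  have cvx: "convex_on {0::real..} (\<lambda>x. x^t)"
  proof (cases "even t")
    case True then show ?thesis using convex_power_even convex_on_subset by blast
  next
    case False then show ?thesis using convex_power_odd by blast
  qed
  have N: "real (card Y) > 0" using assms by (simp add: card_gt_0_iff)
  have "(\<Sum>y\<in>Y. (1 / real (card Y)) *\<^sub>R a y) ^ t \<le> (\<Sum>y\<in>Y. (1 / real (card Y)) * a y ^ t)"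
    by (rule convex_on_sum[OF assms(1,2) cvx, where a="\<lambda>_. 1 / real (card Y)"])
       (use N assms(3) in auto)
  then have "((\<Sum>y\<in>Y. a y) / real (card Y)) ^ t \<le> (\<Sum>y\<in>Y. a y ^ t) / real (card Y)"
    by (simp add: sum_divide_distrib sum_distrib_left)
  then show ?thesis using N by (simp add: field_simps)
qed

lemma binom_lower:
  assumes "t > 0"
  shows "(real d / real t) ^ t - 1 \<le> real (d choose t)"
proof (cases "t \<le> d")
  case True
  then show ?thesis using binomial_ge_n_over_k_pow_k[OF True, where 'a=real] by linarith
next
  case False
  then have "real d / real t \<le> 1" using assms by simp
  then have "(real d / real t) ^ t \<le> 1" by (simp add: power_le_one)
  then show ?thesis by simp
qed

lemma kst:
  fixes ss :: "nat list"
  assumes "sorted ss" "ss \<noteq> []" "\<forall>x\<in>set ss. x > 0"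
  shows "\<exists>C\<ge>0. \<forall>(V::'a set) T. finite V \<longrightarrow> T \<subseteq> {xs. length xs = length ss \<and> set xs \<subseteq> V} \<longrightarrow>
     \<not> hasbox V ss T \<longrightarrow> real (card T) ^ QQ ss \<le> C * real (card V) ^ (length ss * QQ ss - 1)"
  using assms
proof (induction ss)
  case Nil then show ?case by simp
next
  case (Cons t rest)
  have t1: "t \<ge> 1" using Cons.prems by auto
  show ?case
  proof (cases "rest = []")
    case True
    have Q: "QQ (t # rest) = 1" using True by (simp add: QQ_def)
    show ?thesis
    proof (intro exI[of _ "real t"] conjI allI impI)
      fix V :: "'a set" and T
      assume fV: "finite V" and TS: "T \<subseteq> {xs. length xs = length (t # rest) \<and> set xs \<subseteq> V}"
        and nb: "\<not> hasbox V (t # rest) T"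
      define A where "A = {v\<in>V. [v] \<in> T}"
      have TA: "T = (\<lambda>v. [v]) ` A"
      proof
        show "T \<subseteq> (\<lambda>v. [v]) ` A"
        proof
          fix xs assume "xs \<in> T"
          with TS True obtain v where "xs = [v]" "v \<in> V" by (auto simp: length_Suc_conv)
          with \<open>xs \<in> T\<close> show "xs \<in> (\<lambda>v. [v]) ` A" unfolding A_def by auto
        qed
      qed (auto simp: A_def)
      have cT: "card T = card A" unfolding TA by (rule card_image) (auto simp: inj_on_def)
      have "card A < t"
      proof (rule ccontr)
        assume "\<not> card A < t"
        then obtain B where B: "B \<subseteq> A" "card B = t" by (meson obtain_subset_with_card_n not_less)
        have BA: "v \<in> B \<Longrightarrow> v \<in> V \<and> [v] \<in> T" for v using B(1) unfolding A_def by auto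
        have "hasbox V (t # rest) T"
          unfolding hasbox_def
        proof (intro exI[of _ "[B]"] conjI allI impI)
          show "boxset [B] \<subseteq> T"
          proof
            fix xs assume "xs \<in> boxset [B]"
            then obtain v where "xs = [v]" "v \<in> B" unfolding boxset_def by (auto simp: length_Suc_conv)
            with BA show "xs \<in> T" by auto
          qed
        qed (use B BA True in auto)
        with nb show False by simp
      qed
      then show "real (card T) ^ QQ (t # rest) \<le> real t * real (card V) ^ (length (t # rest) * QQ (t # rest) - 1)"
        using True Q cT by simp
    qed simp
  next
    case False
    have srt: "sorted rest" using Cons.prems by simp
    from Cons.IH[OF srt False] Cons.prems obtain C' where C0: "C' \<ge> 0" and IH:
      "\<And>(V::'a set) T. finite V \<Longrightarrow> T \<subseteq> {xs. length xs = length rest \<and> set xs \<subseteq> V} \<Longrightarrow>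
       \<not> hasbox V rest T \<Longrightarrow> real (card T) ^ QQ rest \<le> C' * real (card V) ^ (length rest * QQ rest - 1)"
      by auto
    define Q where "Q = QQ rest"
    define k where "k = length rest"
    have QQ: "QQ (t # rest) = t * Q" using False unfolding Q_def QQ_def by (cases rest) auto
    have Q1: "Q \<ge> 1"
    proof -
      have "\<forall>x\<in>set (butlast rest). x > 0" using Cons.prems by (auto dest: in_set_butlastD)
      moreover have "\<forall>x\<in>set xs. (x::nat) > 0 \<Longrightarrow> prod_list xs > 0" for xs by (induction xs) auto
      ultimately have "prod_list (butlast rest) > 0" by blast
      then show ?thesis unfolding Q_def QQ_def by simp
    qed
    have k1: "k \<ge> 1" using False k_def by (cases rest) auto
    define C where "C = C' * 2^Q * real t ^ (t*Q) + (2 * real t) ^ (t*Q)"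
    show ?thesis
    proof (intro exI[of _ C] conjI allI impI)
      show "C \<ge> 0" unfolding C_def using C0 by simp
      fix V :: "'a set" and T
      assume fV: "finite V" and TS: "T \<subseteq> {xs. length xs = length (t # rest) \<and> set xs \<subseteq> V}"
        and nb: "\<not> hasbox V (t # rest) T"
      define n where "n = card V"
      show "real (card T) ^ QQ (t # rest) \<le> C * real (card V) ^ (length (t # rest) * QQ (t # rest) - 1)"
      proof (cases "n = 0")
        case True
        then have "V = {}" using fV n_def by simp
        then have "T = {}" using TS by auto
        have tQ: "t * Q \<noteq> 0" using t1 Q1 by simp
        have "0 \<le> C * real (card V) ^ (length (t # rest) * QQ (t # rest) - 1)" unfolding C_def using C0 by simp
        moreover have "real (card T) ^ QQ (t # rest) = 0" using \<open>T = {}\<close> QQ tQ by (simp add: power_0_left)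
        ultimately show ?thesis by linarith
      next
        case False
        then have n1: "n \<ge> 1" by simp
        define Y where "Y = {ys. set ys \<subseteq> V \<and> length ys = k}"
        have fY: "finite Y" unfolding Y_def using fV by (simp add: finite_lists_length_eq)
        have cY: "card Y = n ^ k" unfolding Y_def n_def by (rule card_lists_length_eq[OF fV])
        define Dy where "Dy y = {v\<in>V. v # y \<in> T}" for y
        define d where "d y = card (Dy y)" for y
        have fDy: "finite (Dy y)" for y unfolding Dy_def using fV by simp
        have cardT: "card T = (\<Sum>y\<in>Y. d y)"
        proof -
          have "T = (\<lambda>(y,v). v # y) ` (SIGMA y:Y. Dy y)"
          proof
            show "T \<subseteq> (\<lambda>(y,v). v # y) ` (SIGMA y:Y. Dy y)"
            proof
              fix xs assume xT: "xs \<in> T"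
              with TS obtain v y where "xs = v # y" "length y = k" "set y \<subseteq> V" "v \<in> V"
                by (auto simp: length_Suc_conv k_def)
              with xT show "xs \<in> (\<lambda>(y,v). v # y) ` (SIGMA y:Y. Dy y)"
                unfolding Y_def Dy_def by (auto intro!: image_eqI[of _ _ "(y,v)"])
            qed
          qed (auto simp: Dy_def)
          moreover have "inj_on (\<lambda>(y,v). v # y) (SIGMA y:Y. Dy y)" by (auto simp: inj_on_def)
          ultimately have "card T = card (SIGMA y:Y. Dy y)" by (simp add: card_image)
          also have "\<dots> = (\<Sum>y\<in>Y. d y)" unfolding d_def using fY fDy by (simp add: card_SigmaI)
          finally show ?thesis .
        qed
        define Bs where "Bs = {B. B \<subseteq> V \<and> card B = t}"
        have fBs: "finite Bs" unfolding Bs_def using fV by simp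
        define TB where "TB B = {y\<in>Y. B \<subseteq> Dy y}" for B
        have swap: "(\<Sum>B\<in>Bs. card (TB B)) = (\<Sum>y\<in>Y. d y choose t)"
        proof -
          have "(\<Sum>B\<in>Bs. card (TB B)) = (\<Sum>B\<in>Bs. \<Sum>y\<in>Y. if B \<subseteq> Dy y then 1 else 0)"
            unfolding TB_def using fY by (simp add: sum.If_cases Int_def)
          also have "\<dots> = (\<Sum>y\<in>Y. \<Sum>B\<in>Bs. if B \<subseteq> Dy y then 1 else 0)" by (rule sum.swap)
          also have "\<dots> = (\<Sum>y\<in>Y. d y choose t)"
          proof (rule sum.cong[OF refl])
            fix y assume "y \<in> Y"
            have "(\<Sum>B\<in>Bs. if B \<subseteq> Dy y then 1 else 0) = card {B\<in>Bs. B \<subseteq> Dy y}"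
              using fBs by (simp add: sum.If_cases Int_def)
            also have "{B\<in>Bs. B \<subseteq> Dy y} = {B. B \<subseteq> Dy y \<and> card B = t}"
              unfolding Bs_def Dy_def by auto
            also have "card \<dots> = d y choose t" unfolding d_def by (rule n_subsets[OF fDy])
            finally show "(\<Sum>B\<in>Bs. if B \<subseteq> Dy y then 1 else 0) = d y choose t" .
          qed
          finally show ?thesis .
        qed
        have boundB: "real (card (TB B)) ^ Q \<le> C' * real n ^ (k * Q - 1)" if "B \<in> Bs" for B
        proof -
          have "\<not> hasbox V rest (TB B)"
          proof
            assume "hasbox V rest (TB B)"
            then obtain As where As: "length As = length rest" "\<forall>i<length rest. As!i \<subseteq> V \<and> card (As!i) = rest!i"
              "boxset As \<subseteq> TB B" unfolding hasbox_def by blast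
            have "hasbox V (t # rest) T"
              unfolding hasbox_def
            proof (intro exI[of _ "B # As"] conjI)
              show "\<forall>i<length (t # rest). (B # As) ! i \<subseteq> V \<and> card ((B # As) ! i) = (t # rest) ! i"
                using As that unfolding Bs_def by (auto simp: nth_Cons split: nat.splits)
              show "boxset (B # As) \<subseteq> T"
                using As(3) unfolding boxset_Cons TB_def Dy_def by auto
            qed (use As in simp)
            with nb show False by simp
          qed
          moreover have "TB B \<subseteq> {xs. length xs = length rest \<and> set xs \<subseteq> V}"
            unfolding TB_def Y_def k_def by auto
          ultimately show ?thesis using IH[OF fV] unfolding Q_def k_def n_def by blast
        qed
        define S where "S = real (\<Sum>B\<in>Bs. card (TB B))"
        have Sup: "S ^ Q \<le> real n ^ (t*Q) * (C' * real n ^ (k*Q-1))"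
        proof (cases "Bs = {}")
          case True
          have "S ^ Q = 0" unfolding S_def using True Q1 by (simp add: power_0_left)
          moreover have "0 \<le> real n ^ (t*Q) * (C' * real n ^ (k*Q-1))" using C0 by simp
          ultimately show ?thesis by linarith
        next
          case False
          define M where "M = Max ((\<lambda>B. card (TB B)) ` Bs)"
          have "M \<in> (\<lambda>B. card (TB B)) ` Bs" unfolding M_def using fBs False by (intro Max_in) auto
          then obtain B0 where B0: "B0 \<in> Bs" "M = card (TB B0)" by auto
          have "(\<Sum>B\<in>Bs. card (TB B)) \<le> card Bs * M"
            using sum_bounded_above[of Bs "\<lambda>B. card (TB B)" M] fBs unfolding M_def by auto
          also have "card Bs = n choose t" unfolding Bs_def n_def by (rule n_subsets[OF fV])
          also have "n choose t \<le> n ^ t" by (cases "t \<le> n") (auto simp: binomial_le_pow binomial_eq_0)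
          finally have "S \<le> real (n ^ t) * real M" unfolding S_def
            by (metis mult_le_mono1 of_nat_le_iff of_nat_mult)
          then have "S ^ Q \<le> (real n ^ t * real M) ^ Q" by (intro power_mono) (simp_all add: S_def sum_nonneg)
          also have "\<dots> = real n ^ (t*Q) * real M ^ Q" by (simp add: power_mult_distrib power_mult)
          also have "\<dots> \<le> real n ^ (t*Q) * (C' * real n ^ (k*Q-1))"
            using boundB[OF B0(1)] B0(2) by (intro mult_left_mono) auto
          finally show ?thesis .
        qed
        define N where "N = real n ^ k"
        define D where "D = real (card T)"
        define x where "x = D / real t / N"
        have Slow: "S \<ge> N * x ^ t - N"
        proof -
          have Yne: "Y \<noteq> {}" using cY n1 by auto
          have "S = (\<Sum>y\<in>Y. real (d y choose t))" unfolding S_def swap by simp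
          also have "\<dots> \<ge> (\<Sum>y\<in>Y. (real (d y) / real t) ^ t - 1)"
            using binom_lower t1 by (intro sum_mono) auto
          finally have "S \<ge> (\<Sum>y\<in>Y. (real (d y) / real t) ^ t) - N"
            using cY unfolding N_def by (simp add: sum_subtractf)
          moreover have "real (card Y) * ((\<Sum>y\<in>Y. real (d y) / real t) / real (card Y)) ^ t
                \<le> (\<Sum>y\<in>Y. (real (d y) / real t) ^ t)"
            by (rule power_mean[OF fY Yne]) simp
          moreover have "(\<Sum>y\<in>Y. real (d y) / real t) = D / real t"
            unfolding D_def cardT by (simp add: sum_divide_distrib)
          ultimately show ?thesis unfolding x_def using cY unfolding N_def by simp
        qed
        have "D ^ (t*Q) \<le> C * real n ^ (Suc k * (t*Q) - 1)"
          unfolding C_def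
          by (rule alg[OF N_def n1 t1 Q1 k1 Slow x_def _ C0 Sup]) (simp add: D_def)
        then show ?thesis unfolding D_def n_def QQ k_def by simp
      qed
    qed
  qed
qed




definition Ilist :: "nat \<Rightarrow> 'a set \<Rightarrow> 'a list set" where
  "Ilist m V = {xs. length xs = m \<and> distinct xs \<and> set xs \<subseteq> V}"

definition img :: "nat set \<Rightarrow> 'a list \<Rightarrow> 'a set" where
  "img P xs = (\<lambda>j. xs ! j) ` P"

lemma finite_Ilist: "finite V \<Longrightarrow> finite (Ilist m V)"
  unfolding Ilist_def
  by (rule finite_subset[OF _ finite_lists_length_eq[of V m]]) auto

lemma perm_exists:
  assumes fV: "finite V" and Y: "Y \<subseteq> V" and Y': "Y' \<subseteq> V" and c: "card Y = card Y'"
  shows "\<exists>\<sigma>. inj_on \<sigma> V \<and> \<sigma> ` V \<subseteq> V \<and> \<sigma> ` Y = Y'"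
proof -
  have fY: "finite Y" "finite Y'" using fV Y Y' finite_subset by auto
  obtain h1 where h1: "bij_betw h1 Y Y'" using finite_same_card_bij[OF fY c] by blast
  have "card (V - Y) = card (V - Y')" using c Y Y' fY fV by (simp add: card_Diff_subset)
  then obtain h2 where h2: "bij_betw h2 (V - Y) (V - Y')"
    using finite_same_card_bij fV by blast
  define \<sigma> where "\<sigma> v = (if v \<in> Y then h1 v else h2 v)" for v
  have "inj_on \<sigma> V"
  proof (rule inj_onI)
    fix u v assume uv: "u \<in> V" "v \<in> V" "\<sigma> u = \<sigma> v"
    show "u = v"
    proof (cases "u \<in> Y"; cases "v \<in> Y")
      assume "u \<in> Y" "v \<in> Y" then show ?thesis using uv h1 unfolding \<sigma>_def bij_betw_def inj_on_def by auto
    next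
      assume "u \<notin> Y" "v \<notin> Y" then show ?thesis using uv h2 unfolding \<sigma>_def bij_betw_def inj_on_def by auto
    next
      assume a: "u \<in> Y" "v \<notin> Y"
      then have "h1 u \<in> Y'" "h2 v \<in> V - Y'" using h1 h2 uv unfolding bij_betw_def by auto
      then show ?thesis using a uv unfolding \<sigma>_def by auto
    next
      assume a: "u \<notin> Y" "v \<in> Y"
      then have "h1 v \<in> Y'" "h2 u \<in> V - Y'" using h1 h2 uv unfolding bij_betw_def by auto
      then show ?thesis using a uv unfolding \<sigma>_def by auto
    qed
  qed
  moreover have "\<sigma> ` V \<subseteq> V"
    using h1 h2 Y' unfolding \<sigma>_def bij_betw_def by auto
  moreover have "\<sigma> ` Y = Y'"
    using h1 unfolding \<sigma>_def bij_betw_def by (auto simp: image_def)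
  ultimately show ?thesis by blast
qed

lemma img_card:
  assumes "xs \<in> Ilist m V" "P \<subseteq> {..<m}"
  shows "card (img P xs) = card P" "img P xs \<subseteq> V"
proof -
  have "inj_on (nth xs) P" using assms unfolding Ilist_def by (intro inj_on_nth) auto
  then show "card (img P xs) = card P" unfolding img_def by (simp add: card_image)
  show "img P xs \<subseteq> V" using assms unfolding Ilist_def img_def by (auto intro: nth_mem)
qed

lemma fiber_le:
  assumes fV: "finite V" and P: "P \<subseteq> {..<m}" and Y: "Y \<subseteq> V" and Y': "Y' \<subseteq> V" and c: "card Y = card Y'"
  shows "card {xs\<in>Ilist m V. img P xs = Y} \<le> card {xs\<in>Ilist m V. img P xs = Y'}"
proof -
  obtain \<sigma> where s: "inj_on \<sigma> V" "\<sigma> ` V \<subseteq> V" "\<sigma> ` Y = Y'" using perm_exists[OF fV Y Y' c] by blast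
  show ?thesis
  proof (rule card_inj_on_le[of "map \<sigma>"])
    show "inj_on (map \<sigma>) {xs \<in> Ilist m V. img P xs = Y}"
    proof (rule inj_onI)
      fix xs ys assume "xs \<in> {xs \<in> Ilist m V. img P xs = Y}" "ys \<in> {xs \<in> Ilist m V. img P xs = Y}"
        "map \<sigma> xs = map \<sigma> ys"
      then show "xs = ys" using map_inj_on[of \<sigma> xs ys] inj_on_subset[OF s(1)] unfolding Ilist_def by auto
    qed
    show "map \<sigma> ` {xs \<in> Ilist m V. img P xs = Y} \<subseteq> {xs \<in> Ilist m V. img P xs = Y'}"
    proof
      fix zs assume "zs \<in> map \<sigma> ` {xs \<in> Ilist m V. img P xs = Y}"
      then obtain xs where xs: "xs \<in> Ilist m V" "img P xs = Y" "zs = map \<sigma> xs" by auto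
      have "distinct zs" using xs s(1) unfolding Ilist_def by (auto simp: distinct_map intro: inj_on_subset)
      moreover have "set zs \<subseteq> V" using xs s(2) unfolding Ilist_def by auto
      moreover have "length zs = m" using xs unfolding Ilist_def by auto
      moreover have "img P zs = \<sigma> ` img P xs"
        unfolding img_def image_image using xs P unfolding Ilist_def by (intro image_cong) auto
      ultimately show "zs \<in> {xs \<in> Ilist m V. img P xs = Y'}" using xs s(3) unfolding Ilist_def by auto
    qed
    show "finite {xs \<in> Ilist m V. img P xs = Y'}" using finite_Ilist[OF fV] by simp
  qed
qed

lemma count_main:
  assumes fV: "finite V" and mn: "m \<le> card V" and P: "P \<subseteq> {..<m}"
    and G: "\<G> \<subseteq> {Y. Y \<subseteq> V \<and> card Y = card P}"
  shows "real (card {xs\<in>Ilist m V. img P xs \<in> \<G>}) * real (card V choose card P)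
       = real (card (Ilist m V)) * real (card \<G>)"
proof -
  define k where "k = card P"
  define Ks where "Ks = {Y. Y \<subseteq> V \<and> card Y = k}"
  define c where "c Y = card {xs\<in>Ilist m V. img P xs = Y}" for Y
  have fI: "finite (Ilist m V)" using finite_Ilist[OF fV] .
  have kV: "k \<le> card V" using P mn unfolding k_def
    by (metis card_lessThan card_mono finite_lessThan le_trans)
  obtain Y0 where Y0: "Y0 \<in> Ks" using obtain_subset_with_card_n[OF kV] unfolding Ks_def by blast
  have cc: "c Y = c Y0" if "Y \<in> Ks" for Y
    using fiber_le[OF fV P, of Y Y0] fiber_le[OF fV P, of Y0 Y] that Y0 unfolding Ks_def c_def by auto
  have split: "card {xs\<in>Ilist m V. img P xs \<in> A} = (\<Sum>Y\<in>A. c Y)" if "A \<subseteq> Ks" for A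
  proof -
    have fA: "finite A" using that fV unfolding Ks_def
      by (metis (no_types, lifting) Collect_mono Pow_def finite_Pow_iff finite_subset)
    have "{xs\<in>Ilist m V. img P xs \<in> A} = (\<Union>Y\<in>A. {xs\<in>Ilist m V. img P xs = Y})" by auto
    moreover have "card (\<Union>Y\<in>A. {xs\<in>Ilist m V. img P xs = Y}) = (\<Sum>Y\<in>A. card {xs\<in>Ilist m V. img P xs = Y})"
      by (rule card_UN_disjoint[OF fA]) (use fI in auto)
    ultimately show ?thesis unfolding c_def by simp
  qed
  have GK: "\<G> \<subseteq> Ks" using G unfolding Ks_def k_def .
  have fK: "finite Ks" unfolding Ks_def using fV by simp
  have "card {xs\<in>Ilist m V. img P xs \<in> \<G>} = card \<G> * c Y0"
    using split[OF GK] cc GK by (simp add: subset_iff)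
  moreover have "card (Ilist m V) = card Ks * c Y0"
  proof -
    have "Ilist m V = {xs\<in>Ilist m V. img P xs \<in> Ks}"
    proof -
      have "\<forall>xs\<in>Ilist m V. img P xs \<in> Ks" using img_card[OF _ P, of _ V] unfolding Ks_def k_def by blast
      then show ?thesis by auto
    qed
    then have "card (Ilist m V) = (\<Sum>Y\<in>Ks. c Y)" using split[of Ks] by simp
    then show ?thesis using cc by simp
  qed
  moreover have "card Ks = card V choose k" unfolding Ks_def by (rule n_subsets[OF fV])
  ultimately show ?thesis unfolding k_def by simp
qed




definition Tr :: "(nat \<Rightarrow> nat) \<Rightarrow> nat set \<Rightarrow> (nat \<times> nat) set set" where
  "Tr s F = {X. X \<subseteq> (\<Union>i\<in>F. blow_part s i) \<and> (\<forall>i\<in>F. card (X \<inter> blow_part s i) = 1)}"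

lemma blowup_simps: "fst (blowup H s) = (\<Union>i\<in>fst H. blow_part s i)" "snd (blowup H s) = (\<Union>F\<in>snd H. Tr s F)"
  unfolding blowup_def Tr_def by auto

lemma Tr_card:
  assumes "finite F" "X \<in> Tr s F"
  shows "card X = card F"
proof -
  have X: "X = (\<Union>i\<in>F. X \<inter> blow_part s i)" using assms(2) unfolding Tr_def by auto
  have "card (\<Union>i\<in>F. X \<inter> blow_part s i) = (\<Sum>i\<in>F. card (X \<inter> blow_part s i))"
  proof (rule card_UN_disjoint[OF assms(1)])
    show "\<forall>i\<in>F. finite (X \<inter> blow_part s i)" unfolding blow_part_def by auto
    show "\<forall>i\<in>F. \<forall>j\<in>F. i \<noteq> j \<longrightarrow> X \<inter> blow_part s i \<inter> (X \<inter> blow_part s j) = {}"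
      unfolding blow_part_def by auto
  qed
  also have "\<dots> = card F" using assms(2) unfolding Tr_def by simp
  finally show ?thesis using X by simp
qed

lemma Tr_witness:
  assumes "\<forall>i\<in>F. s i > 0"
  shows "(\<lambda>i. (i, 0)) ` F \<in> Tr s F"
proof -
  have "(\<lambda>i. (i, 0::nat)) ` F \<inter> blow_part s i = {(i, 0)}" if "i \<in> F" for i
    using that assms unfolding blow_part_def by auto
  then show ?thesis using assms unfolding Tr_def blow_part_def by auto
qed

locale FL =
  fixes R :: "nat set" and L :: "nat hypergraph" and m :: nat and s :: "nat \<Rightarrow> nat"
  assumes fR: "finite R" and Rne: "R \<noteq> {}" and Rpos: "\<forall>k\<in>R. k > 0"
    and flag: "is_flag R L m" and spos: "\<forall>i\<in>{1..m}. s i > 0"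
begin

abbreviation "B \<equiv> blowup L s"

lemma fstL: "fst L = {1..m}" using flag unfolding is_flag_def by auto

lemma edgeL: "F \<in> snd L \<Longrightarrow> F \<subseteq> {1..m} \<and> card F \<in> R \<and> finite F"
  using flag unfolding is_flag_def hypergraph_def by (auto intro: finite_subset)

lemma finite_sndL: "finite (snd L)"
  using flag unfolding is_flag_def hypergraph_def by (auto intro: finite_subset)

lemma cardL: "card ` snd L = R"
proof
  show "card ` snd L \<subseteq> R" using edgeL by auto
  show "R \<subseteq> card ` snd L" using flag unfolding is_flag_def by blast
qed

lemma injL: "inj_on card (snd L)"
proof (rule inj_onI)
  fix F F' assume "F \<in> snd L" "F' \<in> snd L" "card F = card F'"
  moreover have "card F \<in> R" using \<open>F \<in> snd L\<close> edgeL by auto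
  ultimately show "F = F'" using flag unfolding is_flag_def by metis
qed

lemma m_pos: "m \<ge> 1"
proof -
  obtain k where "k \<in> R" using Rne by auto
  then obtain F where F: "F \<in> snd L" "card F = k" using cardL by auto
  then have "F \<noteq> {}" using Rpos \<open>k \<in> R\<close> by auto
  then show ?thesis using edgeL[OF F(1)] by auto
qed

lemma card_le_m: "F \<in> snd L \<Longrightarrow> card F \<le> m"
  using edgeL by (metis card_atLeastAtMost card_mono diff_Suc_1 finite_atLeastAtMost)

lemma R_le_m: "k \<in> R \<Longrightarrow> k \<le> m" using cardL card_le_m by auto

lemma sizesB: "edge_sizes B = R"
proof -
  have "card ` snd B = card ` snd L"
  proof
    show "card ` snd B \<subseteq> card ` snd L"
    proof
      fix k assume "k \<in> card ` snd B"
      then obtain X F where "F \<in> snd L" "X \<in> Tr s F" "k = card X" unfolding blowup_simps by blast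
      then have "k = card F" using Tr_card edgeL by blast
      then show "k \<in> card ` snd L" using \<open>F \<in> snd L\<close> by blast
    qed
    show "card ` snd L \<subseteq> card ` snd B"
    proof
      fix k assume "k \<in> card ` snd L"
      then obtain F where F: "F \<in> snd L" "k = card F" by auto
      have "(\<lambda>i. (i, 0)) ` F \<in> Tr s F" using Tr_witness spos edgeL[OF F(1)] by auto
      moreover have "card ((\<lambda>i. (i, 0::nat)) ` F) = card F" by (simp add: card_image inj_on_def)
      ultimately show "k \<in> card ` snd B" unfolding blowup_simps using F by force
    qed
  qed
  then show ?thesis unfolding edge_sizes_def cardL .
qed

definition adm :: "nat \<Rightarrow> nat hypergraph \<Rightarrow> bool" where
  "adm n G \<longleftrightarrow> fst G = {0..<n} \<and> hypergraph G \<and> edge_sizes G \<subseteq> edge_sizes B \<and> \<not> subhypergraph B G"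

lemma pi_n_eq: "pi_n n B = Max {hdens n G | G. adm n G}"
  unfolding pi_n_def adm_def by simp

lemma adm_finite: "finite {hdens n G | G. adm n G}"
proof -
  have "{hdens n G | G. adm n G} \<subseteq> (\<lambda>E. hdens n ({0..<n}, E)) ` Pow (Pow {0..<n})"
  proof
    fix x assume "x \<in> {hdens n G | G. adm n G}"
    then obtain G where G: "adm n G" "x = hdens n G" by auto
    then have G1: "G = ({0..<n}, snd G)" and G2: "snd G \<in> Pow (Pow {0..<n})"
      unfolding adm_def hypergraph_def by (metis prod.collapse, auto)
    have "x = hdens n ({0..<n}, snd G)" using G(2) G1 by simp
    then show "x \<in> (\<lambda>E. hdens n ({0..<n}, E)) ` Pow (Pow {0..<n})" using G2 by (rule image_eqI)
  qed
  then show ?thesis by (rule finite_subset) simp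
qed

lemma lower:
  assumes "n \<ge> m"
  shows "(\<exists>G. adm n G) \<and> real (card R) - 1 \<le> pi_n n B"
proof -
  define kM where "kM = Max R"
  have kM: "kM \<in> R" unfolding kM_def using fR Rne by simp
  define G0 where "G0 = ({0..<n}, {E. E \<subseteq> {0..<n} \<and> card E \<in> R - {kM}})"
  have hyp: "hypergraph G0" unfolding G0_def hypergraph_def by auto
  have sz: "edge_sizes G0 \<subseteq> edge_sizes B" unfolding sizesB by (auto simp: edge_sizes_def G0_def)
  have nsub: "\<not> subhypergraph B G0"
  proof
    assume "subhypergraph B G0"
    then obtain f where f: "inj_on f (fst B)" "\<forall>E\<in>snd B. f ` E \<in> snd G0"
      unfolding subhypergraph_def by blast
    obtain F where F: "F \<in> snd L" "card F = kM" using kM cardL by auto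
    define X where "X = (\<lambda>i. (i, 0::nat)) ` F"
    have XT: "X \<in> Tr s F" unfolding X_def using Tr_witness spos edgeL[OF F(1)] by auto
    have "X \<subseteq> fst B" using XT edgeL[OF F(1)] unfolding Tr_def blowup_simps fstL by blast
    then have "card (f ` X) = card X" using f(1) by (metis card_image inj_on_subset)
    also have "card X = kM" using Tr_card[OF _ XT] edgeL[OF F(1)] F by auto
    finally have "card (f ` X) = kM" .
    moreover have "f ` X \<in> snd G0" using f(2) XT F(1) unfolding blowup_simps by blast
    ultimately show False unfolding G0_def by auto
  qed
  have adm0: "adm n G0" unfolding adm_def using hyp sz nsub by (simp add: G0_def)
  have "hdens n G0 = real (card R) - 1"
  proof -
    define Lay where "Lay k = {E. E \<subseteq> {0..<n} \<and> card E = k}" for k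
    have sndG0: "snd G0 = (\<Union>k\<in>R - {kM}. Lay k)" unfolding G0_def Lay_def by auto
    have "hdens n G0 = (\<Sum>k\<in>R - {kM}. \<Sum>E\<in>Lay k. 1 / real (n choose card E))"
      unfolding hdens_def sndG0
      by (rule sum.UNION_disjoint) (auto simp: fR Lay_def)
    also have "\<dots> = (\<Sum>k\<in>R - {kM}. 1)"
    proof (rule sum.cong[OF refl])
      fix k assume k: "k \<in> R - {kM}"
      have kn: "k \<le> n" using R_le_m[of k] k assms by auto
      have "(\<Sum>E\<in>Lay k. 1 / real (n choose card E)) = (\<Sum>E\<in>Lay k. 1 / real (n choose k))"
        unfolding Lay_def by simp
      also have "\<dots> = real (card (Lay k)) / real (n choose k)" by simp
      also have "card (Lay k) = n choose k" unfolding Lay_def using n_subsets[of "{0..<n}" k] by simp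
      also have "(n choose k) > 0" using kn by simp
      then have "real (n choose k) / real (n choose k) = 1" by simp
      finally show "(\<Sum>E\<in>Lay k. 1 / real (n choose card E)) = 1" .
    qed
    also have "\<dots> = real (card R) - 1"
    proof -
      have "card R \<ge> 1" using kM fR by (metis One_nat_def Suc_leI card_gt_0_iff empty_iff)
      then show ?thesis using kM fR by (simp add: card_Diff_singleton of_nat_diff)
    qed
    finally show ?thesis .
  qed
  then have "real (card R) - 1 \<le> pi_n n B" unfolding pi_n_eq using adm_finite adm0
    by (metis (mono_tags, lifting) Max_ge mem_Collect_eq)
  then show ?thesis using adm0 by blast
qed

end



context FL begin

definition "pp = sort_key s [1..<Suc m]"
definition "ss = map s pp"
definition "posn i = inv_into {..<m} (nth pp) i"
definition "PF F = {j. j < m \<and> pp ! j \<in> F}"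
definition Tset :: "nat \<Rightarrow> nat hypergraph \<Rightarrow> nat list set" where "Tset n G = {xs\<in>Ilist m {0..<n}. \<forall>F\<in>snd L. img (PF F) xs \<in> snd G}"

lemma pp_set: "set pp = {1..m}" unfolding pp_def set_sort set_upt atLeastLessThanSuc_atLeastAtMost ..
lemma pp_dist: "distinct pp" unfolding pp_def by simp
lemma pp_len: "length pp = m" unfolding pp_def by simp
lemma ss_sorted: "sorted ss" unfolding ss_def pp_def by simp
lemma ss_len: "length ss = m" unfolding ss_def using pp_len by simp
lemma pp_bij: "bij_betw (nth pp) {..<m} {1..m}"
  by (rule bij_betw_nth) (auto simp: pp_dist pp_len pp_set)
lemma pp_in: "j < m \<Longrightarrow> pp ! j \<in> {1..m}"
  using pp_bij unfolding bij_betw_def by auto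
lemma posn1: "i \<in> {1..m} \<Longrightarrow> posn i < m \<and> pp ! posn i = i"
  unfolding posn_def using pp_bij
  by (metis bij_betw_def bij_betw_inv_into_right inv_into_into lessThan_iff)
lemma posn2: "j < m \<Longrightarrow> posn (pp ! j) = j"
  unfolding posn_def using pp_bij bij_betw_inv_into_left by fastforce
lemma ss_nth: "j < m \<Longrightarrow> ss ! j = s (pp ! j)" unfolding ss_def using pp_len by simp
lemma ss_pos: "\<forall>x\<in>set ss. x > 0" unfolding ss_def using pp_set spos by auto

lemma PF_card: "F \<in> snd L \<Longrightarrow> card (PF F) = card F \<and> PF F \<subseteq> {..<m}"
proof -
  assume F: "F \<in> snd L"
  have "nth pp ` PF F = F" using edgeL[OF F] posn1 unfolding PF_def by force
  moreover have "inj_on (nth pp) (PF F)" using pp_bij unfolding bij_betw_def PF_def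
    by (auto intro: inj_on_subset)
  ultimately show ?thesis unfolding PF_def by (metis (no_types, lifting) card_image mem_Collect_eq subsetI lessThan_iff)
qed

lemma embed:
  fixes n :: nat and G :: "nat hypergraph"
  assumes hb: "hasbox {0..<n} ss (Tset n G)" and fG: "fst G = {0..<n}"
  shows "subhypergraph B G"
proof -
  obtain As :: "nat set list" where As: "length As = m" "\<And>j. j < m \<Longrightarrow> As!j \<subseteq> {0..<n} \<and> card (As!j) = s (pp ! j)"
    "boxset As \<subseteq> Tset n G"
    using hb unfolding hasbox_def ss_len using ss_nth by auto
  have Ane: "As!j \<noteq> {}" if "j < m" for j
    using As(2)[OF that] spos pp_in[OF that] by fastforce
  define pick where "pick j = (SOME z. z \<in> As!j)" for j
  have pick: "j < m \<Longrightarrow> pick j \<in> As!j" for j unfolding pick_def using Ane by (simp add: some_in_eq)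
  have inbox: "xs \<in> boxset As" if "length xs = m" "\<And>j. j < m \<Longrightarrow> xs!j \<in> As!j" for xs
    unfolding boxset_def using that As(1) by auto
  have TI: "xs \<in> Tset n G \<Longrightarrow> distinct xs" for xs unfolding Tset_def Ilist_def by auto
  have disj: "As!j \<inter> As!j' = {}" if "j < m" "j' < m" "j \<noteq> j'" for j j'
  proof (rule ccontr)
    assume "As!j \<inter> As!j' \<noteq> {}"
    then obtain a where a: "a \<in> As!j" "a \<in> As!j'" by auto
    define xs where "xs = map (\<lambda>l. if l = j \<or> l = j' then a else pick l) [0..<m]"
    have "xs \<in> boxset As" using a pick by (intro inbox) (auto simp: xs_def)
    then have "distinct xs" using As(3) TI by auto
    moreover have "xs!j = a" "xs!j' = a" using that by (auto simp: xs_def)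
    moreover have "length xs = m" by (simp add: xs_def)
    ultimately show False using that unfolding distinct_conv_nth by metis
  qed
  define g where "g j t = sorted_list_of_set (As!j) ! t" for j t
  have fA: "finite (As!j)" if "j < m" for j using As(2)[OF that] finite_subset by blast
  have g_in: "g j t \<in> As!j" if "j < m" "t < card (As!j)" for j t
    unfolding g_def using that fA[OF that(1)] by (metis length_sorted_list_of_set nth_mem set_sorted_list_of_set)
  have g_inj: "t = t'" if "j < m" "t < card (As!j)" "t' < card (As!j)" "g j t = g j t'" for j t t'
    using that fA[OF that(1)] unfolding g_def
    by (metis distinct_sorted_list_of_set length_sorted_list_of_set nth_eq_iff_index_eq)
  define f where "f x = g (posn (fst x)) (snd x)" for x
  have fstB: "fst B = (\<Union>i\<in>{1..m}. blow_part s i)" unfolding blowup_simps fstL ..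
  have cardA: "card (As ! posn i) = s i" if "i \<in> {1..m}" for i
    using As(2)[of "posn i"] posn1[OF that] by simp
  have f_in: "f (i,t) \<in> As ! posn i" if "i \<in> {1..m}" "t < s i" for i t
    unfolding f_def using g_in posn1[OF that(1)] cardA[OF that(1)] that(2) by simp
  have inj: "inj_on f (fst B)"
  proof (rule inj_onI)
    fix x y assume x: "x \<in> fst B" and y: "y \<in> fst B" and fxy: "f x = f y"
    obtain i t where xi: "x = (i,t)" "i \<in> {1..m}" "t < s i" using x unfolding fstB blow_part_def by auto
    obtain i' t' where yi: "y = (i',t')" "i' \<in> {1..m}" "t' < s i'" using y unfolding fstB blow_part_def by auto
    have "posn i = posn i'"
    proof (rule ccontr)
      assume "posn i \<noteq> posn i'"
      then have "As ! posn i \<inter> As ! posn i' = {}" using disj posn1 xi yi by auto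
      moreover have "f x \<in> As ! posn i" "f y \<in> As ! posn i'" using f_in xi yi by auto
      ultimately show False using fxy by auto
    qed
    then have ii: "i = i'" using posn1 xi yi by metis
    have "t = t'"
      using g_inj[of "posn i" t t'] posn1[OF xi(2)] cardA[OF xi(2)] xi yi fxy ii unfolding f_def by auto
    then show "x = y" using xi yi ii by simp
  qed
  have into: "f ` fst B \<subseteq> fst G"
  proof
    fix z assume "z \<in> f ` fst B"
    then obtain i t where "i \<in> {1..m}" "t < s i" "z = f (i,t)" unfolding fstB blow_part_def by auto
    then show "z \<in> fst G" using f_in As(2) posn1 fG by blast
  qed
  have edges: "f ` E \<in> snd G" if E: "E \<in> snd B" for E
  proof -
    obtain F where F: "F \<in> snd L" "E \<in> Tr s F" using E unfolding blowup_simps by blast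
    have Fm: "F \<subseteq> {1..m}" using edgeL[OF F(1)] by auto
    have one: "card (E \<inter> blow_part s i) = 1" if "i \<in> F" for i using F(2) that unfolding Tr_def by auto
    define tt where "tt i = snd (the_elem (E \<inter> blow_part s i))" for i
    have tt: "E \<inter> blow_part s i = {(i, tt i)} \<and> tt i < s i" if iF: "i \<in> F" for i
    proof -
      obtain e where e: "E \<inter> blow_part s i = {e}" using one[OF iF] by (metis card_1_singletonE)
      then have "e \<in> blow_part s i" by auto
      then have "e = (i, snd e)" "snd e < s i" unfolding blow_part_def by auto
      then show ?thesis using e unfolding tt_def by simp
    qed
    have Eeq: "E = (\<lambda>i. (i, tt i)) ` F"
    proof
      show "E \<subseteq> (\<lambda>i. (i, tt i)) ` F"
      proof
        fix x assume "x \<in> E"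
        then obtain i where "i \<in> F" "x \<in> blow_part s i" using F(2) unfolding Tr_def by blast
        then show "x \<in> (\<lambda>i. (i, tt i)) ` F" using tt \<open>x \<in> E\<close> by blast
      qed
      show "(\<lambda>i. (i, tt i)) ` F \<subseteq> E" using tt by blast
    qed
    define xs where "xs = map (\<lambda>j. if pp!j \<in> F then g j (tt (pp!j)) else pick j) [0..<m]"
    have "xs \<in> boxset As"
    proof (rule inbox)
      show "length xs = m" by (simp add: xs_def)
      fix j assume j: "j < m"
      show "xs ! j \<in> As ! j"
      proof (cases "pp!j \<in> F")
        case True
        have "tt (pp!j) < card (As!j)" using tt[OF True] As(2)[OF j] by simp
        then show ?thesis using True j g_in by (simp add: xs_def)
      next
        case False then show ?thesis using j pick by (simp add: xs_def)
      qed
    qed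
    then have "xs \<in> Tset n G" using As(3) by auto
    then have "img (PF F) xs \<in> snd G" using F(1) unfolding Tset_def by auto
    moreover have "img (PF F) xs = f ` E"
    proof -
      have PFeq: "PF F = posn ` F" unfolding PF_def
      proof
        show "{j. j < m \<and> pp ! j \<in> F} \<subseteq> posn ` F" using posn2 by force
        show "posn ` F \<subseteq> {j. j < m \<and> pp ! j \<in> F}" using posn1 Fm by auto
      qed
      have "img (PF F) xs = (\<lambda>i. xs ! posn i) ` F" unfolding img_def PFeq image_image ..
      also have "\<dots> = (\<lambda>i. g (posn i) (tt i)) ` F"
      proof (rule image_cong[OF refl])
        fix i assume "i \<in> F"
        then have "i \<in> {1..m}" using Fm by auto
        then show "xs ! posn i = g (posn i) (tt i)" using posn1 \<open>i \<in> F\<close> by (simp add: xs_def)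
      qed
      also have "\<dots> = f ` E" unfolding Eeq image_image f_def by simp
      finally show ?thesis .
    qed
    ultimately show ?thesis by simp
  qed
  show ?thesis unfolding subhypergraph_def using inj into edges by blast
qed

end



lemma alg2:
  fixes cT cI e C :: real and n m Q :: nat
  assumes n1: "n \<ge> 1" and Q1: "Q \<ge> 1" and e0: "e > 0" and cI: "cI \<ge> (real n / 2) ^ m"
    and cT: "cT \<ge> cI * e" and KST: "cT ^ Q \<le> C * real n ^ (m*Q - 1)" and m1: "m \<ge> 1"
  shows "e \<le> (C * 2^(m*Q)) powr (1 / real Q) * real n powr (- (1 / real Q))"
proof -
  have np: "real n > 0" using n1 by simp
  have h0: "0 \<le> (real n / 2) ^ m" by simp
  have "((real n / 2) ^ m * e) ^ Q \<le> (cI * e) ^ Q"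
    using cI e0 h0 by (intro power_mono mult_right_mono) auto
  also have "\<dots> \<le> cT ^ Q"
  proof -
    have "cI \<ge> 0" using cI h0 by linarith
    then have "0 \<le> cI * e" using e0 by simp
    then show ?thesis using cT by (intro power_mono) auto
  qed
  also have "\<dots> \<le> C * real n ^ (m*Q - 1)" by (rule KST)
  finally have A: "((real n / 2) ^ m * e) ^ Q \<le> C * real n ^ (m*Q - 1)" .
  have mQ: "m*Q = Suc (m*Q - 1)" using m1 Q1 by (metis Suc_diff_1 mult_pos_pos less_le_trans zero_less_one le_less_trans not_le not_one_le_zero)
  have "((real n / 2) ^ m * e) ^ Q = e ^ Q * real n * real n ^ (m*Q - 1) / 2 ^ (m*Q)"
  proof -
    have "((real n / 2) ^ m * e) ^ Q = e ^ Q * real n ^ (m*Q) / 2 ^ (m*Q)"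
      by (simp add: power_mult_distrib power_divide power_mult[symmetric] mult.commute)
    also have "real n ^ (m*Q) = real n * real n ^ (m*Q - 1)" by (subst mQ) simp
    finally show ?thesis by simp
  qed
  with A have "e ^ Q * real n * real n ^ (m*Q - 1) \<le> C * 2^(m*Q) * real n ^ (m*Q - 1)"
    by (simp add: divide_le_eq mult.commute mult.left_commute)
  then have "e ^ Q * real n \<le> C * 2^(m*Q)" using np by (simp add: mult_le_cancel_right)
  then have B: "e ^ Q \<le> C * 2^(m*Q) / real n" using np by (simp add: le_divide_eq)
  have C0: "0 \<le> C * 2^(m*Q) / real n" using B e0 by (meson order.trans zero_le_power less_imp_le)
  have "e = (e ^ Q) powr (1 / real Q)"
    using e0 Q1 by (simp add: powr_realpow[symmetric] powr_powr)
  also have "\<dots> \<le> (C * 2^(m*Q) / real n) powr (1 / real Q)"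
    using B e0 by (intro powr_mono2) auto
  also have "\<dots> = (C * 2^(m*Q)) powr (1 / real Q) / real n powr (1 / real Q)"
    using C0 np by (subst powr_divide) (auto simp: zero_le_divide_iff)
  also have "\<dots> = (C * 2^(m*Q)) powr (1 / real Q) * real n powr (- (1 / real Q))"
    by (simp add: powr_minus divide_inverse)
  finally show ?thesis .
qed

context FL begin

definition "Gk G k = {E\<in>snd G. card E = k}"

lemma hdens_split:
  assumes "adm n G"
  shows "hdens n G = (\<Sum>k\<in>R. real (card (Gk G k)) / real (n choose k))"
proof -
  have sub: "snd G \<subseteq> Pow {0..<n}" using assms unfolding adm_def hypergraph_def by auto
  have fG: "finite (snd G)" using sub by (rule finite_subset) simp
  have sz: "card E \<in> R" if "E \<in> snd G" for E
    using assms that sizesB unfolding adm_def edge_sizes_def by auto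
  have eq: "snd G = (\<Union>k\<in>R. Gk G k)" unfolding Gk_def using sz by auto
  have "hdens n G = (\<Sum>k\<in>R. \<Sum>E\<in>Gk G k. 1 / real (n choose card E))"
    unfolding hdens_def by (subst eq, rule sum.UNION_disjoint) (auto simp: fR Gk_def intro: finite_subset[OF _ fG])
  also have "\<dots> = (\<Sum>k\<in>R. real (card (Gk G k)) / real (n choose k))"
    by (rule sum.cong[OF refl]) (simp add: Gk_def)
  finally show ?thesis .
qed

lemma good_count:
  assumes G: "adm n G" and F: "F \<in> snd L" and nm: "n \<ge> m"
  shows "real (card {xs\<in>Ilist m {0..<n}. img (PF F) xs \<in> snd G})
        = real (card (Ilist m {0..<n})) * (real (card (Gk G (card F))) / real (n choose card F))"
proof -
  have P: "card (PF F) = card F" "PF F \<subseteq> {..<m}" using PF_card[OF F] by auto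
  have sub: "snd G \<subseteq> Pow {0..<n}" using G unfolding adm_def hypergraph_def by auto
  have "{xs\<in>Ilist m {0..<n}. img (PF F) xs \<in> snd G} = {xs\<in>Ilist m {0..<n}. img (PF F) xs \<in> Gk G (card F)}"
    using img_card(1)[OF _ P(2)] P(1) unfolding Gk_def by auto
  moreover have "real (card {xs\<in>Ilist m {0..<n}. img (PF F) xs \<in> Gk G (card F)}) * real (card {0..<n} choose card (PF F))
       = real (card (Ilist m {0..<n})) * real (card (Gk G (card F)))"
    by (rule count_main) (use nm P sub in \<open>auto simp: Gk_def\<close>)
  moreover have "(n choose card F) > 0" using card_le_m[OF F] nm by simp
  ultimately show ?thesis using P by (simp add: field_simps)
qed

lemma upper_count:
  assumes G: "adm n G" and nm: "n \<ge> m"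
  shows "real (card (Tset n G)) \<ge> real (card (Ilist m {0..<n})) * (hdens n G - (real (card R) - 1))"
proof -
  define I where "I = Ilist m {0..<n}"
  define Good where "Good F = {xs\<in>I. img (PF F) xs \<in> snd G}" for F
  define U where "U = (\<Union>F\<in>snd L. I - Good F)"
  define g where "g k = real (card (Gk G k)) / real (n choose k)" for k
  have fI: "finite I" unfolding I_def by (rule finite_Ilist) simp
  have TU: "Tset n G = I - U" unfolding Tset_def U_def Good_def I_def by auto
  have UI: "U \<subseteq> I" unfolding U_def by auto
  have "card I = card (I - U) + card U"
    using card_Diff_subset[OF finite_subset[OF UI fI] UI] card_mono[OF fI UI] by simp
  moreover have "card U \<le> (\<Sum>F\<in>snd L. card (I - Good F))" unfolding U_def by (rule card_UN_le[OF finite_sndL])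
  ultimately have "card I \<le> card (Tset n G) + (\<Sum>F\<in>snd L. card (I - Good F))" unfolding TU by linarith
  then have "real (card I) \<le> real (card (Tset n G) + (\<Sum>F\<in>snd L. card (I - Good F)))" by (rule of_nat_mono)
  then have A: "real (card I) \<le> real (card (Tset n G)) + (\<Sum>F\<in>snd L. real (card (I - Good F)))" by simp
  have B: "real (card (I - Good F)) = real (card I) * (1 - g (card F))" if F: "F \<in> snd L" for F
  proof -
    have "Good F \<subseteq> I" unfolding Good_def by auto
    then have "card (I - Good F) = card I - card (Good F)" by (simp add: card_Diff_subset fI finite_subset)
    moreover have "card (Good F) \<le> card I" using \<open>Good F \<subseteq> I\<close> fI by (simp add: card_mono)
    ultimately have "real (card (I - Good F)) = real (card I) - real (card (Good F))" by simp
    also have "real (card (Good F)) = real (card I) * g (card F)"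
      unfolding Good_def I_def g_def by (rule good_count[OF G F nm])
    finally show ?thesis by (simp add: algebra_simps)
  qed
  have "(\<Sum>F\<in>snd L. real (card (I - Good F))) = (\<Sum>F\<in>snd L. real (card I) * (1 - g (card F)))"
    using B by simp
  also have "\<dots> = (\<Sum>k\<in>card ` snd L. real (card I) * (1 - g k))"
    by (simp add: sum.reindex[OF injL])
  also have "\<dots> = real (card I) * (real (card R) - (\<Sum>k\<in>R. g k))"
    unfolding cardL by (simp add: sum_distrib_left[symmetric] sum_subtractf)
  also have "(\<Sum>k\<in>R. g k) = hdens n G" unfolding g_def hdens_split[OF G] ..
  finally show ?thesis using A unfolding I_def by (simp add: algebra_simps)
qed

lemma I_card_lower:
  assumes "n \<ge> 2*m"
  shows "real (card (Ilist m {0..<n::nat})) \<ge> (real n / 2) ^ m"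
proof -
  have "card (Ilist m {0..<n}) = \<Prod>{n - m + 1..n}"
    unfolding Ilist_def using card_lists_distinct_length_eq[of "{0..<n}" m] assms by simp
  then have "real (card (Ilist m {0..<n})) = (\<Prod>i\<in>{n - m + 1..n}. real i)" by simp
  also have "\<dots> \<ge> (\<Prod>i\<in>{n - m + 1..n}. real n / 2)"
    by (rule prod_mono) (use assms in auto)
  also have "(\<Prod>i\<in>{n - m + 1..n}. real n / 2) = (real n / 2) ^ m" using assms by simp
  finally show ?thesis .
qed

definition "Q = QQ ss"

lemma Q_pos: "Q \<ge> 1"
proof -
  have "\<forall>x\<in>set (butlast ss). x > 0" using ss_pos by (auto dest: in_set_butlastD)
  moreover have "\<forall>x\<in>set xs. (x::nat) > 0 \<Longrightarrow> prod_list xs > 0" for xs by (induction xs) auto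
  ultimately show ?thesis unfolding Q_def QQ_def by (metis One_nat_def Suc_leI)
qed

lemma delta_eq: "real (Max (s ` {1..m})) / real (\<Prod>i\<in>{1..m}. s i) = 1 / real Q"
proof -
  have ne: "ss \<noteq> []" using ss_len m_pos by auto
  have img: "s ` {1..m} = set ss" unfolding ss_def using pp_set by simp
  have ssd: "butlast ss @ [last ss] = ss" using ne by simp
  have "sorted (butlast ss @ [last ss])" unfolding ssd by (rule ss_sorted)
  then have le: "\<forall>y\<in>set (butlast ss). y \<le> last ss" by (simp add: sorted_append)
  have setss: "set ss = insert (last ss) (set (butlast ss))"
  proof -
    have "set (butlast ss @ [last ss]) = insert (last ss) (set (butlast ss))" by simp
    then show ?thesis unfolding ssd .
  qed
  have mx: "Max (set ss) = last ss"
    by (rule Max_eqI) (use le in \<open>auto simp: setss\<close>)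
  have "(\<Prod>i\<in>{1..m}. s i) = prod_list ss"
    unfolding ss_def pp_set[symmetric] by (rule prod.distinct_set_conv_list[OF pp_dist])
  also have "\<dots> = Q * last ss"
  proof -
    have "prod_list (butlast ss @ [last ss]) = prod_list (butlast ss) * last ss" by simp
    then show ?thesis unfolding ssd Q_def QQ_def .
  qed
  finally have "(\<Prod>i\<in>{1..m}. s i) = Q * last ss" .
  moreover have "last ss > 0" using ss_pos ne by simp
  ultimately show ?thesis unfolding img mx by simp
qed

lemma upper_ex: "\<exists>K\<ge>0. \<forall>n\<ge>2*m. \<forall>G. adm n G \<longrightarrow> hdens n G \<le> real (card R) - 1 + K * real n powr (- (1 / real Q))"
proof -
  have ne: "ss \<noteq> []" using ss_len m_pos by auto
  obtain C where C0: "C \<ge> 0" and C: "\<And>(V::nat set) T. finite V \<Longrightarrow> T \<subseteq> {xs. length xs = length ss \<and> set xs \<subseteq> V} \<Longrightarrow>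
     \<not> hasbox V ss T \<Longrightarrow> real (card T) ^ QQ ss \<le> C * real (card V) ^ (length ss * QQ ss - 1)"
    using kst[OF ss_sorted ne ss_pos] by blast
  define K where "K = (C * 2^(m*Q)) powr (1 / real Q)"
  show ?thesis
  proof (intro exI[of _ K] conjI allI impI)
    show "K \<ge> 0" unfolding K_def by simp
    fix n :: nat and G assume n: "n \<ge> 2*m" and G: "adm n G"
    have nm: "n \<ge> m" "n \<ge> 1" using n m_pos by auto
    show "hdens n G \<le> real (card R) - 1 + K * real n powr (- (1 / real Q))"
    proof (cases "hdens n G \<le> real (card R) - 1")
      case True
      then show ?thesis unfolding K_def by (smt (verit) mult_nonneg_nonneg powr_ge_zero)
    next
      case False
      have nb: "\<not> hasbox {0..<n} ss (Tset n G)"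
        using embed G unfolding adm_def by blast
      have Tsub: "Tset n G \<subseteq> {xs. length xs = length ss \<and> set xs \<subseteq> {0..<n}}"
        unfolding Tset_def Ilist_def ss_len by auto
      have kk: "real (card (Tset n G)) ^ Q \<le> C * real n ^ (m * Q - 1)"
        using C[OF _ Tsub nb] ss_len unfolding Q_def by simp
      have "hdens n G - (real (card R) - 1) \<le> K * real n powr (- (1 / real Q))"
        unfolding K_def
        by (rule alg2[OF nm(2) Q_pos _ I_card_lower[OF n] upper_count[OF G nm(1)] kk m_pos]) (use False in simp)
      then show ?thesis by simp
    qed
  qed
qed

end



theorem mainTheorem15:
  fixes R :: "nat set" and L :: "nat hypergraph" and m :: nat and s :: "nat \<Rightarrow> nat"
  assumes "finite R" and "R \<noteq> {}" and "\<forall>k\<in>R. k > 0"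
    and "is_flag R L m"
    and "\<forall>i\<in>{1..m}. s i > 0"
  shows "(\<lambda>n. pi_n n (blowup L s) - (real (card R) - 1))
           \<in> O(\<lambda>n. real n powr (- (real (Max (s ` {1..m})) / real (\<Prod>i\<in>{1..m}. s i))))"
proof -
  interpret FL R L m s by unfold_locales (use assms in auto)
  obtain K where K0: "K \<ge> 0" and K: "\<And>n G. n \<ge> 2*m \<Longrightarrow> adm n G \<Longrightarrow>
      hdens n G \<le> real (card R) - 1 + K * real n powr (- (1 / real Q))"
    using upper_ex by blast
  have main: "norm (pi_n n (blowup L s) - (real (card R) - 1))
      \<le> K * norm (real n powr (- (real (Max (s ` {1..m})) / real (\<Prod>i\<in>{1..m}. s i))))"
    if n: "n \<ge> 2*m" for n
  proof -
    have nm: "n \<ge> m" using n by simp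
    obtain G0 where G0: "adm n G0" and lo: "real (card R) - 1 \<le> pi_n n B" using lower[OF nm] by blast
    have ne: "{hdens n G | G. adm n G} \<noteq> {}" using G0 by blast
    have "pi_n n B \<le> real (card R) - 1 + K * real n powr (- (1 / real Q))"
      unfolding pi_n_eq using adm_finite ne K[OF n] by (subst Max_le_iff) auto
    then have "\<bar>pi_n n B - (real (card R) - 1)\<bar> \<le> K * real n powr (- (1 / real Q))"
      using lo by simp
    then show ?thesis unfolding delta_eq by simp
  qed
  show ?thesis
    by (rule bigoI[where c=K]) (use main in \<open>auto simp: eventually_at_top_linorder\<close>)
qed


end
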